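(* Let $\delta>1$, $\gamma>0$, $A_s,A_u>0$, $\rho_s,\rho_u>0$, $\lambda>0$, $\overline{L}_{BR}>0$ and $L_{other}\ge 0$. For $j\in\{s,u\}$ let $j^*(L)=\left[\gamma^{-\delta}A_j^{\delta-1}L\right]^{\frac{1}{1+\delta\rho_j}}$ for $L>0$. For $BR>0$ and $FS\in[0,BR]$ put $f=FS/BR$, $L(BR,FS)=\overline{L}_{BR}+\lambda(BR-FS)+L_{other}$, and define \[ G_j(BR,FS)=\frac{d j^*}{dL}\big(L(BR,FS)\big)\cdot\lambda(1-f),\qquad j\in\{s,u\}. \] Then $G_s(BR,FS)\ge 0$ and $G_u(BR,FS)\ge 0$, and for $FS$ in the interior $(0,BR)$, \[ \frac{\partial G_s}{\partial FS}(BR,FS)<0,\qquad \frac{\partial G_u}{\partial FS}(BR,FS)<0. \]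
   Context: Model of the legal labor market with forum shopping: $s^*(L),u^*(L)$ are the equilibrium employment levels of skilled and unskilled legal workers given demand for legal services $L$ (derived from labor supply $j=(w_j/\gamma)^{1/\rho_j}$ and marginal-product wages $w_j=A_j^{\frac{\delta-1}{\delta}}(L/j)^{1/\delta}$ of a CES firm with elasticity $\delta$). $BR$ measures local bankruptcies and $FS$ the part forum shopped (filed in a non-local court); $f=FS/BR$ is the forum-shopped share. The bankruptcy shock has magnitude $h(BR,f)=\lambda(1-f)BR=\lambda(BR-FS)$, and demand is $L=\overline{L}_{BR}+h+L_{other}$, where $\overline{L}_{BR}$ is the steady-state quantity of bankruptcy legal services and $L_{other}$ other legal services. The paper defines the effect of bankruptcies on employment as $\frac{\partial j}{\partial BR}=\frac{\partial j}{\partial L}\cdot\frac{\partial L}{\partial BR}$ with $\frac{\partial L}{\partial BR}=\lambda(1-f)$ (i.e. holding $f$ fixed); $G_j$ is this quantity, and the claim is that it is nonnegative and decreasing in forum shopping. *)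

theory Defs
  imports "HOL-Analysis.Analysis"
begin

definition jstar :: "real \<Rightarrow> real \<Rightarrow> real \<Rightarrow> real \<Rightarrow> real \<Rightarrow> real" where
  "jstar \<delta> \<gamma> A \<rho> L = (\<gamma> powr (-\<delta>) * A powr (\<delta> - 1) * L) powr (1 / (1 + \<delta> * \<rho>))"

definition Ldem :: "real \<Rightarrow> real \<Rightarrow> real \<Rightarrow> real \<Rightarrow> real \<Rightarrow> real" where
  "Ldem Lbar lam Lother BR FS = Lbar + lam * (BR - FS) + Lother"

definition Gj :: "real \<Rightarrow> real \<Rightarrow> real \<Rightarrow> real \<Rightarrow> real \<Rightarrow> real \<Rightarrow> real \<Rightarrow> real \<Rightarrow> real \<Rightarrow> real" where
  "Gj \<delta> \<gamma> A \<rho> lam Lbar Lother BR FS =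
     deriv (jstar \<delta> \<gamma> A \<rho>) (Ldem Lbar lam Lother BR FS) * (lam * (1 - FS / BR))"

end

theory Submission
  imports Defs
begin

lemma jderiv:
  fixes c e L :: real assumes "c > 0" "L > 0"
  shows "deriv (\<lambda>L. (c*L) powr e) L = e*(c*L) powr (e-1)*c"
proof (rule DERIV_imp_deriv)
  show "((\<lambda>L. (c*L) powr e) has_real_derivative e*(c*L) powr (e-1)*c) (at L)"
    using assms by (auto intro!: derivative_eq_intros)
qed

lemma keyG:
  fixes c e lam Lb Lo BR FS :: real
  assumes "c > 0" "0 < e" "e < 1" "lam > 0" "BR > 0" "Lb > 0" "Lo \<ge> 0" "0 \<le> FS" "FS \<le> BR"
  shows "deriv (\<lambda>L. (c*L) powr e) (Ldem Lb lam Lo BR FS) * (lam*(1-FS/BR)) \<ge> 0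
    \<and> (0 < FS \<and> FS < BR \<longrightarrow> (\<exists>D. D < 0 \<and> ((\<lambda>x. deriv (\<lambda>L. (c*L) powr e) (Ldem Lb lam Lo BR x) * (lam*(1-x/BR))) has_real_derivative D) (at FS)))"
proof
  define L where "L = Ldem Lb lam Lo BR FS"
  have Lpos: "L > 0" unfolding L_def Ldem_def using assms by (auto intro!: add_pos_nonneg mult_nonneg_nonneg)
  have f: "1 - FS/BR \<ge> 0" using assms by (simp add: field_simps)
  show "deriv (\<lambda>L. (c*L) powr e) (Ldem Lb lam Lo BR FS) * (lam*(1-FS/BR)) \<ge> 0"
    unfolding L_def[symmetric] jderiv[OF assms(1) Lpos] using assms f by simp
  show "0 < FS \<and> FS < BR \<longrightarrow> (\<exists>D. D < 0 \<and> ((\<lambda>x. deriv (\<lambda>L. (c*L) powr e) (Ldem Lb lam Lo BR x) * (lam*(1-x/BR))) has_real_derivative D) (at FS))"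
  proof
    assume FS: "0 < FS \<and> FS < BR"
    define S where "S = {x. Ldem Lb lam Lo BR x > 0}"
    have S: "S = {..< BR + (Lb+Lo)/lam}" unfolding S_def Ldem_def using assms
      by (auto simp: field_simps)
    have oS: "open S" unfolding S by simp
    have FSS: "FS \<in> S" unfolding S_def using Lpos L_def by simp
    define D where "D = e*c*((e-1)*(c*L) powr (e-1-1)*(c*(-lam)) * (lam*(1-FS/BR)) + (c*L) powr (e-1) * (lam*(-1/BR)))"
    have cL: "0 < c*L" using Lpos assms by simp
    have h: "FS * (c * lam) < Lb * c + (Lo * c + BR * (c * lam))"
      using cL unfolding L_def Ldem_def by (simp add: algebra_simps)
    have der: "((\<lambda>x. e*c*(c*Ldem Lb lam Lo BR x) powr (e-1) * (lam*(1-x/BR))) has_real_derivative D) (at FS)"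
      unfolding D_def L_def Ldem_def using Lpos assms h unfolding L_def Ldem_def
      by (auto intro!: derivative_eq_intros simp: field_simps)
    have der2: "((\<lambda>x. deriv (\<lambda>L. (c*L) powr e) (Ldem Lb lam Lo BR x) * (lam*(1-x/BR))) has_real_derivative D) (at FS)"
      apply (rule has_field_derivative_transform_within_open[OF der oS FSS])
      unfolding S_def using jderiv[OF assms(1)] by simp
    define P where "P = (c*L) powr (e-2)"
    have P: "P > 0" unfolding P_def using Lpos assms by simp
    have P1: "(c*L) powr (e-1) = P * (c*L)" proof -
      have "(c*L) powr (e-1) = (c*L) powr ((e-2)+1)" by simp
      also have "... = P * (c*L)" unfolding P_def by (subst powr_add) (use cL in simp)
      finally show ?thesis .
    qed
    have P11: "(c*L) powr (e-1-1) = P" unfolding P_def by simp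
    have D2: "D = e*c*P*c*lam/BR*((1-e)*lam*(BR-FS) - L)"
      using P11 unfolding D_def P1 using assms
      by (simp add: field_simps)
    have "(1-e)*lam*(BR-FS) < lam*(BR-FS)" using assms FS by simp
    also have "lam*(BR-FS) < L" unfolding L_def Ldem_def using assms by simp
    finally have "(1-e)*lam*(BR-FS) - L < 0" by simp
    then have neg: "(1-e)*lam*(BR-FS) - L < 0" .
    have pos: "e*c*P*c*lam/BR > 0" using assms P by simp
    have "D < 0" unfolding D2 using mult_pos_neg[OF pos neg] .
    with der2 show "\<exists>D. D < 0 \<and> ((\<lambda>x. deriv (\<lambda>L. (c*L) powr e) (Ldem Lb lam Lo BR x) * (lam*(1-x/BR))) has_real_derivative D) (at FS)" by blast
  qed
qed

theorem proposition3:
  fixes \<delta> \<gamma> A_s A_u \<rho>_s \<rho>_u lam Lbar Lother BR FS :: real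
  assumes "\<delta> > 1" and "\<gamma> > 0" and "A_s > 0" and "A_u > 0"
    and "\<rho>_s > 0" and "\<rho>_u > 0" and "lam > 0" and "Lbar > 0" and "Lother \<ge> 0"
    and "BR > 0" and "0 \<le> FS" and "FS \<le> BR"
  shows "Gj \<delta> \<gamma> A_s \<rho>_s lam Lbar Lother BR FS \<ge> 0
       \<and> Gj \<delta> \<gamma> A_u \<rho>_u lam Lbar Lother BR FS \<ge> 0
       \<and> (0 < FS \<and> FS < BR \<longrightarrow>
            (\<exists>D. D < 0 \<and> ((\<lambda>x. Gj \<delta> \<gamma> A_s \<rho>_s lam Lbar Lother BR x) has_real_derivative D) (at FS))
          \<and> (\<exists>D. D < 0 \<and> ((\<lambda>x. Gj \<delta> \<gamma> A_u \<rho>_u lam Lbar Lother BR x) has_real_derivative D) (at FS)))"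
proof -
  have gen: "Gj \<delta> \<gamma> A \<rho> lam Lbar Lother BR FS \<ge> 0
    \<and> (0 < FS \<and> FS < BR \<longrightarrow> (\<exists>D. D < 0 \<and> ((\<lambda>x. Gj \<delta> \<gamma> A \<rho> lam Lbar Lother BR x) has_real_derivative D) (at FS)))"
    if A: "A > 0" and r: "\<rho> > 0" for A \<rho>
  proof -
    have j: "jstar \<delta> \<gamma> A \<rho> = (\<lambda>L. ((\<gamma> powr (-\<delta>) * A powr (\<delta> - 1)) * L) powr (1 / (1 + \<delta> * \<rho>)))"
      unfolding jstar_def by (rule ext) simp
    have G: "Gj \<delta> \<gamma> A \<rho> lam Lbar Lother BR = (\<lambda>x. deriv (\<lambda>L. ((\<gamma> powr (-\<delta>) * A powr (\<delta> - 1)) * L) powr (1 / (1 + \<delta> * \<rho>))) (Ldem Lbar lam Lother BR x) * (lam*(1-x/BR)))"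
      unfolding Gj_def j by (rule ext) simp
    have c: "\<gamma> powr (-\<delta>) * A powr (\<delta> - 1) > 0" using A assms by simp
    have e1: "0 < 1 / (1 + \<delta> * \<rho>)" using assms r by (simp add: add_pos_pos)
    have dr: "0 < \<delta> * \<rho>" using assms r by simp
    have e2: "1 / (1 + \<delta> * \<rho>) < 1" using dr by (simp add: divide_simps)
    show ?thesis unfolding G using keyG[OF c e1 e2 assms(7,10,8,9,11,12)] by simp
  qed
  show ?thesis using gen[OF assms(3,5)] gen[OF assms(4,6)] by blast
qed

end
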